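(* Any two equivalent reduced operation sequences have the same profile.
   Context: Operation sequences: $\sigma[a]$ ($a\ge1$) denotes pushing the top $a$ elements of the input stack, as a block with relative order unchanged, onto the top of a working stack; $\tau[b]$ ($b\ge1$) denotes moving the top $b$ elements of the working stack, as a block with relative order unchanged, onto the top of an output stack; $\sigma=\sigma[1]$, $\tau=\tau[1]$. A well-formed operation sequence is a word $\alpha=\alpha_1\cdots\alpha_m$ in these symbols such that in every prefix the total push size is at least the total pop size, with equality for the whole word; its size $n$ is the total push size. Acting on an input stack containing $1,\dots,n$ with $1$ on top, it produces the permutation read from the final output stack top to bottom. Two well-formed sequences are equivalent if they have the same size and produce the same permutation. $\alpha$ is reduced if every consecutive pair $\alpha_i\alpha_{i+1}$ with $\alpha_i$ a push and $\alpha_{i+1}$ a pop equals $\sigma[1]\tau[1]$. The profile of $\alpha$ is the polygonal path through $v_0=(0,0),v_1,\dots,v_m$ where $v_i=v_{i-1}+(a,a)$ if $\alpha_i=\sigma[a]$ and $v_i=v_{i-1}+(b,-b)$ if $\alpha_i=\tau[b]$. *)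

theory Defs
  imports "HOL-Analysis.Analysis"
begin

text \<open>Operations: Push a is sigma[a], Pop b is tau[b].\<close>
datatype op = Push nat | Pop nat

fun push_size :: "op \<Rightarrow> nat" where
  "push_size (Push a) = a" | "push_size (Pop b) = 0"

fun pop_size :: "op \<Rightarrow> nat" where
  "pop_size (Push a) = 0" | "pop_size (Pop b) = b"

fun is_push :: "op \<Rightarrow> bool" where
  "is_push (Push a) = True" | "is_push (Pop b) = False"

fun is_pop :: "op \<Rightarrow> bool" where
  "is_pop (Push a) = False" | "is_pop (Pop b) = True"

fun op_arg :: "op \<Rightarrow> nat" where
  "op_arg (Push a) = a" | "op_arg (Pop b) = b"

definition seq_size :: "op list \<Rightarrow> nat" where
  "seq_size \<alpha> = sum_list (map push_size \<alpha>)"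

definition well_formed :: "op list \<Rightarrow> bool" where
  "well_formed \<alpha> \<longleftrightarrow>
     (\<forall>x \<in> set \<alpha>. op_arg x \<ge> 1) \<and>
     (\<forall>k \<le> length \<alpha>. sum_list (map pop_size (take k \<alpha>)) \<le> sum_list (map push_size (take k \<alpha>))) \<and>
     sum_list (map pop_size \<alpha>) = sum_list (map push_size \<alpha>)"

text \<open>Stacks are lists with the head being the top. State = (input, working, output).\<close>
fun step :: "nat list \<times> nat list \<times> nat list \<Rightarrow> op \<Rightarrow> nat list \<times> nat list \<times> nat list" where
  "step (inp, w, out) (Push a) = (drop a inp, take a inp @ w, out)"
| "step (inp, w, out) (Pop b) = (inp, drop b w, take b w @ out)"

text \<open>Permutation produced on input 1..n (1 on top), read from the output stack top to bottom.\<close>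
definition produced :: "op list \<Rightarrow> nat list" where
  "produced \<alpha> = snd (snd (foldl step ([1..<seq_size \<alpha> + 1], [], []) \<alpha>))"

definition equivalent :: "op list \<Rightarrow> op list \<Rightarrow> bool" where
  "equivalent \<alpha> \<beta> \<longleftrightarrow> seq_size \<alpha> = seq_size \<beta> \<and> produced \<alpha> = produced \<beta>"

definition reduced :: "op list \<Rightarrow> bool" where
  "reduced \<alpha> \<longleftrightarrow> (\<forall>i. Suc i < length \<alpha> \<longrightarrow> is_push (\<alpha> ! i) \<longrightarrow> is_pop (\<alpha> ! Suc i) \<longrightarrow>
      \<alpha> ! i = Push 1 \<and> \<alpha> ! Suc i = Pop 1)"

fun op_vec :: "op \<Rightarrow> real \<times> real" where
  "op_vec (Push a) = (real a, real a)"
| "op_vec (Pop b) = (real b, - real b)"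

definition vertex :: "op list \<Rightarrow> nat \<Rightarrow> real \<times> real" where
  "vertex \<alpha> i = sum_list (map op_vec (take i \<alpha>))"

definition profile :: "op list \<Rightarrow> (real \<times> real) set" where
  "profile \<alpha> = {vertex \<alpha> 0} \<union> (\<Union>i \<in> {1..length \<alpha>}. closed_segment (vertex \<alpha> (i - 1)) (vertex \<alpha> i))"

end

theory Submission
  imports Defs "HOL-Analysis.Analysis"
begin

definition E :: "op list \<Rightarrow> real \<times> real" where "E \<alpha> = sum_list (map op_vec \<alpha>)"

lemma profile_nil: "profile [] = {0}"
  by (simp add: profile_def vertex_def)

lemma vertex_snoc: "i \<le> length \<alpha> \<Longrightarrow> vertex (\<alpha> @ [q]) i = vertex \<alpha> i"
  by (simp add: vertex_def)

lemma profile_snoc: "profile (\<alpha> @ [q]) = profile \<alpha> \<union> closed_segment (E \<alpha>) (E \<alpha> + op_vec q)"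
proof -
  have "{1..length (\<alpha> @ [q])} = insert (Suc (length \<alpha>)) {1..length \<alpha>}" by auto
  then have "profile (\<alpha> @ [q]) = {vertex (\<alpha> @ [q]) 0} \<union>
     (closed_segment (vertex (\<alpha> @ [q]) (length \<alpha>)) (vertex (\<alpha> @ [q]) (Suc (length \<alpha>))) \<union>
      (\<Union>i \<in> {1..length \<alpha>}. closed_segment (vertex (\<alpha> @ [q]) (i - 1)) (vertex (\<alpha> @ [q]) i)))"
    unfolding profile_def by simp
  also have "(\<Union>i \<in> {1..length \<alpha>}. closed_segment (vertex (\<alpha> @ [q]) (i - 1)) (vertex (\<alpha> @ [q]) i))
     = (\<Union>i \<in> {1..length \<alpha>}. closed_segment (vertex \<alpha> (i - 1)) (vertex \<alpha> i))"
    apply (rule SUP_cong[OF refl])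
    apply (subst (1 2) vertex_snoc)
    by auto
  also have "vertex (\<alpha> @ [q]) (length \<alpha>) = E \<alpha>" by (simp add: vertex_def E_def)
  also have "vertex (\<alpha> @ [q]) (Suc (length \<alpha>)) = E \<alpha> + op_vec q" by (simp add: vertex_def E_def)
  also have "vertex (\<alpha> @ [q]) 0 = vertex \<alpha> 0" by (simp add: vertex_def)
  finally show ?thesis unfolding profile_def by blast
qed

lemma E_in_profile: "E \<alpha> \<in> profile \<alpha>"
proof (induction \<alpha> rule: rev_induct)
  case Nil then show ?case by (simp add: profile_nil E_def)
next
  case (snoc x xs)
  have "E (xs @ [x]) = E xs + op_vec x" by (simp add: E_def)
  then show ?case by (simp add: profile_snoc)
qed

lemma E_app: "E (xs @ ys) = E xs + E ys" by (simp add: E_def)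

fun ex1 :: "op \<Rightarrow> op list" where
  "ex1 (Push a) = replicate a (Push 1)"
| "ex1 (Pop b) = replicate b (Pop 1)"

definition ex :: "op list \<Rightarrow> op list" where "ex \<alpha> = concat (map ex1 \<alpha>)"

lemma E_rep: "E (replicate a (Push 1)) = (real a, real a)" "E (replicate a (Pop 1)) = (real a, - real a)"
  by (induction a) (auto simp: E_def zero_prod_def)

lemma E_ex1: "E (ex1 q) = op_vec q"
  by (cases q) (simp_all add: E_rep[simplified])

lemma E_ex: "E (ex \<alpha>) = E \<alpha>"
  by (induction \<alpha>) (simp_all add: ex_def E_def E_ex1[unfolded E_def])

lemma seg_join:
  fixes P v :: "real \<times> real" and a :: nat
  shows "closed_segment P (P + real a *\<^sub>R v) \<union> closed_segment (P + real a *\<^sub>R v) (P + real a *\<^sub>R v + v)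
       = closed_segment P (P + real (Suc a) *\<^sub>R v)"
proof -
  have "P + real a *\<^sub>R v \<in> closed_segment P (P + real (Suc a) *\<^sub>R v)"
    unfolding in_segment
  proof (intro exI conjI)
    let ?u = "real a / real (Suc a)"
    show "0 \<le> ?u" "?u \<le> 1" by auto
    have "(1 - ?u) *\<^sub>R P + ?u *\<^sub>R (P + real (Suc a) *\<^sub>R v) = P + (?u * real (Suc a)) *\<^sub>R v"
      by (simp add: algebra_simps scaleR_add_left[symmetric] add_divide_distrib[symmetric] del: scaleR_add_left)
    also have "?u * real (Suc a) = real a" by simp
    finally show "P + real a *\<^sub>R v = (1 - ?u) *\<^sub>R P + ?u *\<^sub>R (P + real (Suc a) *\<^sub>R v)" by simp
  qed
  moreover have "P + real a *\<^sub>R v + v = P + real (Suc a) *\<^sub>R v" by (simp add: algebra_simps)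
  ultimately show ?thesis using Un_closed_segment by metis
qed

lemma profile_rep:
  fixes v :: "real \<times> real"
  assumes "op_vec u = v"
  shows "profile (\<beta> @ replicate a u) = profile \<beta> \<union> closed_segment (E \<beta>) (E \<beta> + real a *\<^sub>R v)"
proof (induction a)
  case 0
  then show ?case using E_in_profile[of \<beta>] by auto
next
  case (Suc a)
  have Ea: "E (\<beta> @ replicate a u) = E \<beta> + real a *\<^sub>R v"
  proof (induction a)
    case 0 then show ?case by (simp add: E_def)
  next
    case (Suc a)
    have "\<beta> @ replicate (Suc a) u = (\<beta> @ replicate a u) @ [u]" by (simp add: replicate_append_same)
    then show ?case using Suc assms by (simp add: E_app E_def algebra_simps)
  qed
  have "\<beta> @ replicate (Suc a) u = (\<beta> @ replicate a u) @ [u]" by (simp add: replicate_append_same)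
  then have "profile (\<beta> @ replicate (Suc a) u) = profile \<beta> \<union> closed_segment (E \<beta>) (E \<beta> + real a *\<^sub>R v)
      \<union> closed_segment (E \<beta> + real a *\<^sub>R v) (E \<beta> + real a *\<^sub>R v + v)"
    using Suc Ea assms by (simp only: profile_snoc)
  then show ?case using seg_join by (simp add: Un_assoc)
qed

lemma profile_ex: "profile (ex \<alpha>) = profile \<alpha>"
proof (induction \<alpha> rule: rev_induct)
  case Nil then show ?case by (simp add: ex_def)
next
  case (snoc q xs)
  have exs: "ex (xs @ [q]) = ex xs @ ex1 q" by (simp add: ex_def)
  show ?case
  proof (cases q)
    case (Push a)
    have "profile (ex xs @ ex1 q) = profile (ex xs) \<union> closed_segment (E (ex xs)) (E (ex xs) + real a *\<^sub>R (1,1))"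
      using profile_rep[of "Push 1" "(1,1)" "ex xs" a] Push by simp
    then show ?thesis using Push snoc exs by (simp add: profile_snoc E_ex)
  next
    case (Pop a)
    have "profile (ex xs @ ex1 q) = profile (ex xs) \<union> closed_segment (E (ex xs)) (E (ex xs) + real a *\<^sub>R (1,-1))"
      using profile_rep[of "Pop 1" "(1,-1)" "ex xs" a] Pop by simp
    then show ?thesis using Pop snoc exs by (simp add: profile_snoc E_ex)
  qed
qed


definition pushes :: "op list \<Rightarrow> nat" where "pushes \<gamma> = sum_list (map push_size \<gamma>)"
definition pops :: "op list \<Rightarrow> nat" where "pops \<gamma> = sum_list (map pop_size \<gamma>)"

lemma pushes_simps[simp]: "pushes [] = 0" "pushes (x # xs) = push_size x + pushes xs"
  "pushes (xs @ ys) = pushes xs + pushes ys"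
  by (simp_all add: pushes_def)
lemma pops_simps[simp]: "pops [] = 0" "pops (x # xs) = pop_size x + pops xs"
  "pops (xs @ ys) = pops xs + pops ys"
  by (simp_all add: pops_def)

definition ff :: "nat list \<Rightarrow> nat \<Rightarrow> nat" where
  "ff \<pi> k = length (takeWhile (\<lambda>y. y < k) (rev \<pi>))"

fun good :: "nat list \<Rightarrow> nat \<Rightarrow> nat \<Rightarrow> op list \<Rightarrow> bool" where
  "good \<pi> c p [] = True"
| "good \<pi> c p (Push a # w) = (a = 1 \<and> ff \<pi> (Suc c) \<le> p \<and> good \<pi> (Suc c) p w)"
| "good \<pi> c p (Pop b # w) = (b = 1 \<and> p < ff \<pi> (Suc c) \<and> good \<pi> c (Suc p) w)"

lemma good_uniq: "good \<pi> c p w1 \<Longrightarrow> good \<pi> c p w2 \<Longrightarrow> length w1 = length w2 \<Longrightarrow> w1 = w2"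
proof (induction w1 arbitrary: c p w2)
  case Nil then show ?case by simp
next
  case (Cons x xs)
  then obtain y ys where w2: "w2 = y # ys" by (cases w2) auto
  show ?case
  proof (cases x)
    case (Push a)
    then show ?thesis using Cons w2 by (cases y) auto
  next
    case (Pop a)
    then show ?thesis using Cons w2 by (cases y) auto
  qed
qed

lemma takeWhile_mono_len: "(\<And>y. P y \<Longrightarrow> Q y) \<Longrightarrow> length (takeWhile P xs) \<le> length (takeWhile Q xs)"
  by (induction xs) auto

lemma ff_mono: "k \<le> k' \<Longrightarrow> ff \<pi> k \<le> ff \<pi> k'"
  unfolding ff_def by (rule takeWhile_mono_len) auto

lemma good_pushes: "ff \<pi> (c + a) \<le> p \<Longrightarrow> good \<pi> (c + a) p rest \<Longrightarrow> good \<pi> c p (replicate a (Push 1) @ rest)"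
proof (induction a arbitrary: c)
  case 0 then show ?case by simp
next
  case (Suc a)
  have "ff \<pi> (Suc c) \<le> ff \<pi> (c + Suc a)" by (rule ff_mono) simp
  moreover have "good \<pi> (Suc c) p (replicate a (Push 1) @ rest)"
    using Suc.IH[of "Suc c"] Suc.prems by simp
  ultimately show ?case using Suc.prems by simp
qed

lemma good_pops: "p + b \<le> ff \<pi> (Suc c) \<Longrightarrow> good \<pi> c (p + b) rest \<Longrightarrow> good \<pi> c p (replicate b (Pop 1) @ rest)"
proof (induction b arbitrary: p)
  case 0 then show ?case by simp
next
  case (Suc b)
  have "good \<pi> c (Suc p) (replicate b (Pop 1) @ rest)"
    using Suc.IH[of "Suc p"] Suc.prems by simp
  then show ?case using Suc.prems by simp
qed

lemma out_suffix: "\<exists>Y. snd (snd (foldl step (i, w, o') \<gamma>)) = Y @ o'"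
proof (induction \<gamma> arbitrary: i w o')
  case Nil then show ?case by simp
next
  case (Cons x xs)
  show ?case
  proof (cases x)
    case (Push a)
    then show ?thesis using Cons[of "drop a i" "take a i @ w" o'] by simp
  next
    case (Pop b)
    from Cons[of i "drop b w" "take b w @ o'"] obtain Y where
      "snd (snd (foldl step (i, drop b w, take b w @ o') xs)) = Y @ take b w @ o'" by blast
    then show ?thesis using Pop by (intro exI[of _ "Y @ take b w"]) simp
  qed
qed

lemma push_run: "\<forall>x\<in>set qs. is_push x \<Longrightarrow> \<exists>W. foldl step (i, w, o') qs = (drop (pushes qs) i, W, o')"
proof (induction qs arbitrary: i w)
  case Nil then show ?case by simp
next
  case (Cons x xs)
  then obtain a where x: "x = Push a" by (cases x) auto
  from Cons.IH[of "drop a i" "take a i @ w"] Cons.prems obtain W where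
    "foldl step (drop a i, take a i @ w, o') xs = (drop (pushes xs) (drop a i), W, o')" by auto
  then show ?case using x by (simp add: add.commute)
qed

lemma len_tw: "\<not> P y \<Longrightarrow> length (takeWhile P (xs @ y # ys)) \<le> length xs"
  by (induction xs) auto

lemma reduced_tl: "reduced (x # xs) \<Longrightarrow> reduced xs"
  unfolding reduced_def
proof (intro allI impI)
  fix i assume R: "\<forall>i. Suc i < length (x # xs) \<longrightarrow> is_push ((x # xs) ! i) \<longrightarrow> is_pop ((x # xs) ! Suc i) \<longrightarrow>
      (x # xs) ! i = Push 1 \<and> (x # xs) ! Suc i = Pop 1"
    and "Suc i < length xs" "is_push (xs ! i)" "is_pop (xs ! Suc i)"
  then show "xs ! i = Push 1 \<and> xs ! Suc i = Pop 1" using R[rule_format, of "Suc i"] by simp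
qed

lemma pops_all_push: "\<forall>x\<in>set qs. is_push x \<Longrightarrow> pops qs = 0"
proof (induction qs)
  case Nil then show ?case by simp
next
  case (Cons x xs) then show ?case by (cases x) auto
qed


lemma push_case_ff:
  assumes inp: "inp = [Suc c..<Suc n]"
    and sz: "pushes (Push a # \<gamma>') = n - c"
    and tot: "pops (Push a # \<gamma>') = length w + pushes (Push a # \<gamma>')"
    and red: "reduced (Push a # \<gamma>')"
    and a1: "a \<ge> 1"
  shows "ff (snd (snd (foldl step (inp, w, out) (Push a # \<gamma>')))) (c + a) \<le> length out"
proof -
  define qs where "qs = takeWhile is_push \<gamma>'"
  define rest where "rest = dropWhile is_push \<gamma>'"
  have g': "\<gamma>' = qs @ rest" by (simp add: qs_def rest_def)
  have qsp: "\<forall>x\<in>set qs. is_push x" by (auto simp: qs_def dest: set_takeWhileD)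
  have "pops \<gamma>' > 0" using tot a1 by simp
  then have "rest \<noteq> []" using g' pops_all_push[OF qsp] by auto
  moreover have "\<not> is_push (hd rest)" using \<open>rest \<noteq> []\<close> unfolding rest_def
    by (metis hd_dropWhile)
  ultimately obtain b rest' where rest: "rest = Pop b # rest'"
    by (cases rest; cases "hd rest") auto
  define i where "i = length qs"
  have gam: "Push a # \<gamma>' = (Push a # qs) @ Pop b # rest'" using g' rest by simp
  have lastp: "is_push (last (Push a # qs))" using qsp
    by (metis last_in_set list.distinct(1) set_ConsD is_push.simps(1))
  have "(Push a # \<gamma>') ! i = last (Push a # qs)"
    unfolding gam i_def by (simp add: nth_append last_conv_nth)
  moreover have "(Push a # \<gamma>') ! Suc i = Pop b"
    unfolding gam i_def by (simp add: nth_append)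
  moreover have "Suc i < length (Push a # \<gamma>')" unfolding gam i_def by simp
  ultimately have L: "last (Push a # qs) = Push 1" and b1: "b = 1"
    using red lastp unfolding reduced_def by force+
  define pre where "pre = butlast (Push a # qs)"
  have pq: "Push a # qs = pre @ [Push 1]"
    using L unfolding pre_def by (metis append_butlast_last_id list.distinct(1))
  have prep: "\<forall>x\<in>set pre. is_push x" using qsp unfolding pre_def
    by (metis in_set_butlastD is_push.simps(1) set_ConsD)
  define t where "t = pushes pre"
  have "pushes (Push a # qs) = t + 1" using pq t_def by (metis pushes_simps push_size.simps(1) add.right_neutral)
  then have t1: "t + 1 = a + pushes qs" by simp
  have tlt: "t < n - c" using sz t1 g' by simp
  obtain W where W: "foldl step (inp, w, out) pre = (drop t inp, W, out)"
    using push_run[OF prep] t_def by blast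
  have dt: "drop t inp = (Suc c + t) # [Suc (Suc c + t)..<Suc n]"
    proof -
    have "drop t inp = [Suc c + t..<Suc n]" using inp by (simp only: drop_upt)
    then show ?thesis using tlt by (simp add: upt_conv_Cons del: upt_Suc)
  qed
  have "foldl step (inp, w, out) ((pre @ [Push 1]) @ [Pop 1]) =
      (drop 1 (drop t inp), drop 1 (take 1 (drop t inp) @ W), take 1 (take 1 (drop t inp) @ W) @ out)"
    by (simp add: W)
  then have "foldl step (inp, w, out) ((pre @ [Push 1]) @ [Pop 1]) = ([Suc (Suc c + t)..<Suc n], W, (Suc c + t) # out)"
    using dt by simp
  then have F: "foldl step (inp, w, out) (Push a # \<gamma>') = foldl step ([Suc (Suc c + t)..<Suc n], W, (Suc c + t) # out) rest'"
    using gam pq b1 by (metis append.assoc append_Cons append_Nil foldl_append)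
  obtain Y where Y: "snd (snd (foldl step ([Suc (Suc c + t)..<Suc n], W, (Suc c + t) # out) rest')) = Y @ (Suc c + t) # out"
    using out_suffix by blast
  have "rev (Y @ (Suc c + t) # out) = rev out @ (Suc c + t) # rev Y" by simp
  moreover have "\<not> (Suc c + t < c + a)" using t1 by simp
  ultimately have "length (takeWhile (\<lambda>y. y < c + a) (rev (Y @ (Suc c + t) # out))) \<le> length (rev out)"
    by (metis len_tw)
  then show ?thesis using F Y by (simp add: ff_def)
qed

lemma main:
  assumes "inp = [Suc c..<Suc n]" "\<forall>x\<in>set w \<union> set out. x \<le> c" "pushes \<gamma> = n - c" "c \<le> n"
    "\<forall>k \<le> length \<gamma>. pops (take k \<gamma>) \<le> length w + pushes (take k \<gamma>)"
    "pops \<gamma> = length w + pushes \<gamma>" "reduced \<gamma>" "\<forall>x\<in>set \<gamma>. op_arg x \<ge> 1"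
  shows "good (snd (snd (foldl step (inp, w, out) \<gamma>))) c (length out) (ex \<gamma>)"
  using assms
proof (induction \<gamma> arbitrary: c inp w out)
  case Nil then show ?case by (simp add: ex_def)
next
  case (Cons x \<gamma>')
  let ?\<pi> = "snd (snd (foldl step (inp, w, out) (x # \<gamma>')))"
  have exc: "ex (x # \<gamma>') = ex1 x @ ex \<gamma>'" by (simp add: ex_def)
  have red': "reduced \<gamma>'" using Cons.prems(7) by (rule reduced_tl)
  have hw: "\<And>y. y \<in> set w \<Longrightarrow> y \<le> c" using Cons.prems(2) by blast
  have ho: "\<And>y. y \<in> set out \<Longrightarrow> y \<le> c" using Cons.prems(2) by blast
  show ?case
  proof (cases x)
    case (Push a)
    have a1: "a \<ge> 1" using Cons.prems(8) Push by simp
    have an: "a \<le> n - c" using Cons.prems(3) Push by simp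
    have ff: "ff ?\<pi> (c + a) \<le> length out"
      using push_case_ff[of inp c n a \<gamma>' w out] Cons.prems Push a1 by simp
    have tk: "take a inp = [Suc c..<Suc c + a]" using Cons.prems(1) an take_upt[of "Suc c" a "Suc n"] by simp
    have IH: "good (snd (snd (foldl step (drop a inp, take a inp @ w, out) \<gamma>'))) (c + a) (length out) (ex \<gamma>')"
    proof (rule Cons.IH)
      show "drop a inp = [Suc (c + a)..<Suc n]" using Cons.prems(1) by (simp del: upt_Suc)
      show "\<forall>x\<in>set (take a inp @ w) \<union> set out. x \<le> c + a"
      proof -
        have "set (take a inp) = {Suc c..<Suc c + a}" using tk by (simp only: set_upt)
        show ?thesis
        proof
          fix y assume y: "y \<in> set (take a inp @ w) \<union> set out"
          show "y \<le> c + a"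
          proof (cases "y \<in> set (take a inp)")
            case True then show ?thesis using \<open>set (take a inp) = _\<close> by auto
          next
            case False then have "y \<in> set w \<union> set out" using y by auto
            then have "y \<le> c" using Cons.prems(2) by blast
            then show ?thesis by simp
          qed
        qed
      qed
      show "pushes \<gamma>' = n - (c + a)" using Cons.prems(3) Push by simp
      show "c + a \<le> n" using an Cons.prems(4) by simp
      show "\<forall>k\<le>length \<gamma>'. pops (take k \<gamma>') \<le> length (take a inp @ w) + pushes (take k \<gamma>')"
      proof (intro allI impI)
        fix k assume "k \<le> length \<gamma>'"
        then have "pops (take (Suc k) (x # \<gamma>')) \<le> length w + pushes (take (Suc k) (x # \<gamma>'))"
          using Cons.prems(5)[rule_format, of "Suc k"] by simp
        then show "pops (take k \<gamma>') \<le> length (take a inp @ w) + pushes (take k \<gamma>')"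
          using Push tk by simp
      qed
      show "pops \<gamma>' = length (take a inp @ w) + pushes \<gamma>'" using Cons.prems(6) Push tk by simp
      show "reduced \<gamma>'" by (rule red')
      show "\<forall>x\<in>set \<gamma>'. 1 \<le> op_arg x" using Cons.prems(8) by simp
    qed
    have "good ?\<pi> c (length out) (replicate a (Push 1) @ ex \<gamma>')"
      by (rule good_pushes) (use ff IH Push in simp_all)
    then show ?thesis using exc Push by simp
  next
    case (Pop b)
    have bw: "b \<le> length w" using Cons.prems(5)[rule_format, of 1] Pop by simp
    obtain Y where Y: "?\<pi> = Y @ take b w @ out"
      using out_suffix[of inp "drop b w" "take b w @ out" \<gamma>'] Pop by auto
    have allc: "\<forall>y\<in>set (rev out @ rev (take b w)). y < Suc c"
      using hw ho by (auto dest: in_set_takeD intro: le_imp_less_Suc)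
    have "rev ?\<pi> = (rev out @ rev (take b w)) @ rev Y" using Y by simp
    then have "takeWhile (\<lambda>y. y < Suc c) (rev ?\<pi>) = (rev out @ rev (take b w)) @ takeWhile (\<lambda>y. y < Suc c) (rev Y)"
      using allc by (simp only: takeWhile_append2)
    then have ffb: "length out + b \<le> ff ?\<pi> (Suc c)" using bw by (simp add: ff_def)
    have IH: "good (snd (snd (foldl step (inp, drop b w, take b w @ out) \<gamma>'))) c (length (take b w @ out)) (ex \<gamma>')"
    proof (rule Cons.IH)
      show "inp = [Suc c..<Suc n]" by (rule Cons.prems(1))
      show "\<forall>x\<in>set (drop b w) \<union> set (take b w @ out). x \<le> c" using hw ho
        by (auto dest: in_set_takeD in_set_dropD)
      show "pushes \<gamma>' = n - c" using Cons.prems(3) Pop by simp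
      show "c \<le> n" by (rule Cons.prems(4))
      show "\<forall>k\<le>length \<gamma>'. pops (take k \<gamma>') \<le> length (drop b w) + pushes (take k \<gamma>')"
      proof (intro allI impI)
        fix k assume "k \<le> length \<gamma>'"
        then have "pops (take (Suc k) (x # \<gamma>')) \<le> length w + pushes (take (Suc k) (x # \<gamma>'))"
          using Cons.prems(5)[rule_format, of "Suc k"] by simp
        then show "pops (take k \<gamma>') \<le> length (drop b w) + pushes (take k \<gamma>')"
          using Pop bw by simp
      qed
      show "pops \<gamma>' = length (drop b w) + pushes \<gamma>'" using Cons.prems(6) Pop bw by simp
      show "reduced \<gamma>'" by (rule red')
      show "\<forall>x\<in>set \<gamma>'. 1 \<le> op_arg x" using Cons.prems(8) by simp
    qed
    have "good ?\<pi> c (length out) (replicate b (Pop 1) @ ex \<gamma>')"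
      by (rule good_pops) (use ffb IH Pop bw in \<open>simp_all add: add.commute\<close>)
    then show ?thesis using exc Pop by simp
  qed
qed

lemma len_ex: "length (ex \<alpha>) = pushes \<alpha> + pops \<alpha>"
proof (induction \<alpha>)
  case Nil then show ?case by (simp add: ex_def)
next
  case (Cons x xs) then show ?case by (cases x) (auto simp: ex_def)
qed

lemma good_of:
  assumes "well_formed \<alpha>" "reduced \<alpha>"
  shows "good (produced \<alpha>) 0 0 (ex \<alpha>)"
proof -
  have "good (snd (snd (foldl step ([Suc 0..<Suc (seq_size \<alpha>)], [], []) \<alpha>))) 0 (length ([]::nat list)) (ex \<alpha>)"
    by (rule main) (use assms in \<open>auto simp: well_formed_def pushes_def pops_def seq_size_def\<close>)
  then show ?thesis by (simp add: produced_def)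
qed

theorem mainTheorem9:
  fixes \<alpha> \<beta> :: "op list"
  assumes "well_formed \<alpha>" and "well_formed \<beta>"
    and "reduced \<alpha>" and "reduced \<beta>"
    and "equivalent \<alpha> \<beta>"
  shows "profile \<alpha> = profile \<beta>"
proof -
  have g1: "good (produced \<alpha>) 0 0 (ex \<alpha>)" using good_of assms by blast
  have g2: "good (produced \<alpha>) 0 0 (ex \<beta>)" using good_of[of \<beta>] assms by (simp add: equivalent_def)
  have "length (ex \<alpha>) = length (ex \<beta>)"
    using assms(1,2,5) by (simp add: len_ex equivalent_def well_formed_def pushes_def pops_def seq_size_def)
  then have "ex \<alpha> = ex \<beta>" using good_uniq g1 g2 by blast
  then show ?thesis by (metis profile_ex)
qed

end
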